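(* Let $S\subset[m]$ and $w\in\Lambda_S$, and let $JF(w)=\big(\frac{\partial F_i}{\partial v_j}(w)\big)_{i,j}$ be the $m\times m$ Jacobian of $F$ at $w$ (computed from the formula for $F$). Then all eigenvalues of $JF(w)$ other than the numbers $\frac{\partial L}{\partial v_i}(w)$, $i\notin S$, are real and nonpositive; more precisely, the spectrum of $JF(w)$ is $\{\frac{\partial L}{\partial v_i}(w): i\notin S\}$ together with the spectrum of a matrix that is self-adjoint for a suitable inner product and negative semidefinite. In particular $JF(w)$ has a real positive eigenvalue if and only if there is $i\in[m]$ with $w_i=0$ and $\frac{\partial L}{\partial v_i}(w)>0$.
   Context: $H=(V,E)$ is a finite hypergraph with $V=[m]$, $|E|=N\ge1$, hyperedges nonempty subsets of $[m]$, each vertex in at least one hyperedge. For $v\in\mathbb R^m$ and $I\in E$, $v_I=\sum_{i\in I}v_i$. Fix $0<c<1/N$, $\Delta=\{x\in\mathbb R^m: x_i\ge0,\ \sum_i x_i=1,\ x_I\ge c\ \forall I\in E\}$. $L(v)=-\sum_i v_i+\frac1N\sum_{I\in E}\log v_I$ and $F_i(v)=-v_i+\frac1N\sum_{I\ni i}\frac{v_i}{v_I}=v_i\frac{\partial L}{\partial v_i}(v)$. For $S\subset[m]$, $\Delta_S=\{v\in\Delta: v_i=0\iff i\notin S\}$ and $\Lambda_S=\{v\in\Delta_S:\frac{\partial L}{\partial v_i}(v)=0\ \forall i\in S\}$. *)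

theory Defs
  imports "HOL-Analysis.Analysis" "Jordan_Normal_Form.Spectral_Radius"
begin

text \<open>Vertices are 0..m-1 (standing for [m]); vectors in R^m are functions nat => real.\<close>

definition vsum :: "(nat \<Rightarrow> real) \<Rightarrow> nat set \<Rightarrow> real" where
  "vsum v I = (\<Sum>i\<in>I. v i)"

definition Lfun :: "nat \<Rightarrow> nat set set \<Rightarrow> (nat \<Rightarrow> real) \<Rightarrow> real" where
  "Lfun m E v = - (\<Sum>i<m. v i) + (1 / real (card E)) * (\<Sum>I\<in>E. ln (vsum v I))"

definition Ffun :: "nat \<Rightarrow> nat set set \<Rightarrow> nat \<Rightarrow> (nat \<Rightarrow> real) \<Rightarrow> real" where
  "Ffun m E i v = - v i + (1 / real (card E)) * (\<Sum>I\<in>{I\<in>E. i \<in> I}. v i / vsum v I)"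

definition unitv :: "nat \<Rightarrow> nat \<Rightarrow> real" where
  "unitv j = (\<lambda>k. if k = j then 1 else 0)"

definition pderiv_at :: "((nat \<Rightarrow> real) \<Rightarrow> real) \<Rightarrow> nat \<Rightarrow> (nat \<Rightarrow> real) \<Rightarrow> real" where
  "pderiv_at f j v = deriv (\<lambda>t. f (\<lambda>k. v k + t * unitv j k)) 0"

definition dL :: "nat \<Rightarrow> nat set set \<Rightarrow> nat \<Rightarrow> (nat \<Rightarrow> real) \<Rightarrow> real" where
  "dL m E i v = pderiv_at (Lfun m E) i v"

definition Delta :: "nat \<Rightarrow> nat set set \<Rightarrow> real \<Rightarrow> (nat \<Rightarrow> real) set" where
  "Delta m E c = {x. (\<forall>i<m. 0 \<le> x i) \<and> (\<forall>i\<ge>m. x i = 0) \<and> (\<Sum>i<m. x i) = 1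
                     \<and> (\<forall>I\<in>E. c \<le> vsum x I)}"

definition Delta_S :: "nat \<Rightarrow> nat set set \<Rightarrow> real \<Rightarrow> nat set \<Rightarrow> (nat \<Rightarrow> real) set" where
  "Delta_S m E c S = {v \<in> Delta m E c. \<forall>i<m. (v i = 0 \<longleftrightarrow> i \<notin> S)}"

definition Lambda_S :: "nat \<Rightarrow> nat set set \<Rightarrow> real \<Rightarrow> nat set \<Rightarrow> (nat \<Rightarrow> real) set" where
  "Lambda_S m E c S = {v \<in> Delta_S m E c S. \<forall>i\<in>S. dL m E i v = 0}"

definition JF :: "nat \<Rightarrow> nat set set \<Rightarrow> (nat \<Rightarrow> real) \<Rightarrow> real mat" where
  "JF m E w = mat m m (\<lambda>(i, j). pderiv_at (Ffun m E i) j w)"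

definition ip_mat :: "real mat \<Rightarrow> real vec \<Rightarrow> real vec \<Rightarrow> real" where
  "ip_mat P x y = x \<bullet> (P *\<^sub>v y)"

definition is_inner_product_mat :: "nat \<Rightarrow> real mat \<Rightarrow> bool" where
  "is_inner_product_mat n P \<longleftrightarrow> P \<in> carrier_mat n n \<and> P\<^sup>T = P \<and>
     (\<forall>x\<in>carrier_vec n. x \<noteq> 0\<^sub>v n \<longrightarrow> ip_mat P x x > 0)"

definition self_adjoint_wrt :: "nat \<Rightarrow> real mat \<Rightarrow> real mat \<Rightarrow> bool" where
  "self_adjoint_wrt n P B \<longleftrightarrow>
     (\<forall>x\<in>carrier_vec n. \<forall>y\<in>carrier_vec n. ip_mat P (B *\<^sub>v x) y = ip_mat P x (B *\<^sub>v y))"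

definition neg_semidef_wrt :: "nat \<Rightarrow> real mat \<Rightarrow> real mat \<Rightarrow> bool" where
  "neg_semidef_wrt n P B \<longleftrightarrow> (\<forall>x\<in>carrier_vec n. ip_mat P (B *\<^sub>v x) x \<le> 0)"

definition cspectrum :: "real mat \<Rightarrow> complex set" where
  "cspectrum A = spectrum (map_mat complex_of_real A)"

end

theory Submission
  imports Defs
begin



lemma vsum_shift: "finite I \<Longrightarrow> vsum (\<lambda>k. v k + t * unitv j k) I = vsum v I + t * of_bool (j \<in> I)"
  unfolding vsum_def unitv_def by (simp add: sum.distrib flip: sum_distrib_left)

lemma pd_F:
  assumes fE: "finite E" and pos: "\<forall>I\<in>E. finite I \<and> vsum w I > 0"
  shows "pderiv_at (Ffun m E i) j w = - unitv j i + (1 / real (card E)) *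
     (\<Sum>I\<in>{I\<in>E. i \<in> I}. (unitv j i * vsum w I - w i * of_bool (j \<in> I)) / (vsum w I)^2)"
proof -
  have eq: "(\<lambda>t. Ffun m E i (\<lambda>k. w k + t * unitv j k)) = (\<lambda>t. - (w i + t * unitv j i) + (1 / real (card E)) *
     (\<Sum>I\<in>{I\<in>E. i \<in> I}. (w i + t * unitv j i) / (vsum w I + t * of_bool (j \<in> I))))"
    unfolding Ffun_def using pos by (intro ext) (auto intro!: sum.cong simp: vsum_shift)
  have "((\<lambda>t. - (w i + t * unitv j i) + (1 / real (card E)) *
     (\<Sum>I\<in>{I\<in>E. i \<in> I}. (w i + t * unitv j i) / (vsum w I + t * of_bool (j \<in> I))))
     has_real_derivative (- unitv j i + (1 / real (card E)) *
     (\<Sum>I\<in>{I\<in>E. i \<in> I}. (unitv j i * vsum w I - w i * of_bool (j \<in> I)) / (vsum w I)^2))) (at 0)"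
    apply (rule derivative_eq_intros refl)+
    using pos apply (auto simp: power2_eq_square)
    done
  then show ?thesis unfolding pderiv_at_def eq by (rule DERIV_imp_deriv)
qed

lemma pd_L:
  assumes fE: "finite E" and pos: "\<forall>I\<in>E. finite I \<and> vsum w I > 0"
  shows "dL m E i w = - (if i < m then 1 else 0) + (1 / real (card E)) *
     (\<Sum>I\<in>E. of_bool (i \<in> I) / vsum w I)"
proof -
  have eq: "(\<lambda>t. Lfun m E (\<lambda>k. w k + t * unitv i k)) = (\<lambda>t. - (vsum w {..<m} + t * of_bool (i \<in> {..<m})) + (1 / real (card E)) *
     (\<Sum>I\<in>E. ln (vsum w I + t * of_bool (i \<in> I))))"
    unfolding Lfun_def using pos by (intro ext) (auto intro!: sum.cong simp: vsum_shift simp flip: vsum_def)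
  have dI: "\<And>I. I \<in> E \<Longrightarrow> ((\<lambda>t. ln (vsum w I + t * of_bool (i \<in> I))) has_real_derivative (of_bool (i \<in> I) / vsum w I)) (at 0)"
    using pos by (auto intro!: derivative_eq_intros)
  have ds: "((\<lambda>t. \<Sum>I\<in>E. ln (vsum w I + t * of_bool (i \<in> I))) has_real_derivative (\<Sum>I\<in>E. of_bool (i \<in> I) / vsum w I)) (at 0)"
    by (rule DERIV_sum[OF dI])
  have dl: "((\<lambda>t. - (vsum w {..<m} + t * of_bool (i \<in> {..<m}))) has_real_derivative (- of_bool (i \<in> {..<m}))) (at 0)"
    by (auto intro!: derivative_eq_intros)
  have "((\<lambda>t. - (vsum w {..<m} + t * of_bool (i \<in> {..<m})) + (1 / real (card E)) *
     (\<Sum>I\<in>E. ln (vsum w I + t * of_bool (i \<in> I))))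
     has_real_derivative (- of_bool (i \<in> {..<m}) + (1 / real (card E)) *
     (\<Sum>I\<in>E. of_bool (i \<in> I) / vsum w I))) (at 0)"
    by (rule DERIV_add[OF dl DERIV_cmult[OF ds]])
  moreover have "- of_bool (i \<in> {..<m}) = (- (if i < m then 1 else 0) :: real)" by simp
  ultimately have "((\<lambda>t. - (vsum w {..<m} + t * of_bool (i \<in> {..<m})) + (1 / real (card E)) *
     (\<Sum>I\<in>E. ln (vsum w I + t * of_bool (i \<in> I))))
     has_real_derivative (- (if i < m then 1 else 0) + (1 / real (card E)) *
     (\<Sum>I\<in>E. of_bool (i \<in> I) / vsum w I))) (at 0)" by simp
  then show ?thesis unfolding dL_def pderiv_at_def eq by (rule DERIV_imp_deriv)
qed




locale hyp =
  fixes m :: nat and E :: "nat set set" and c :: real and S :: "nat set" and w :: "nat \<Rightarrow> real"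
  assumes E_ne: "E \<noteq> {}"
    and E_edges: "\<forall>I\<in>E. I \<noteq> {} \<and> I \<subseteq> {..<m}"
    and E_cover: "\<forall>i<m. \<exists>I\<in>E. i \<in> I"
    and c_pos: "0 < c" and c_lt: "c < 1 / real (card E)"
    and S_sub: "S \<subseteq> {..<m}"
    and w_in: "w \<in> Lambda_S m E c S"
begin

lemma fE: "finite E"
  by (rule finite_subset[of _ "Pow {..<m}"]) (use E_edges in auto)

lemma fI: "I \<in> E \<Longrightarrow> finite I"
  using E_edges finite_subset by blast

lemma vpos: "I \<in> E \<Longrightarrow> vsum w I > 0"
  using w_in c_pos unfolding Lambda_S_def Delta_S_def Delta_def by force

lemma pos: "\<forall>I\<in>E. finite I \<and> vsum w I > 0"
  using fI vpos by blast

lemma Npos: "card E > 0"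
  using fE E_ne by (simp add: card_gt_0_iff)

lemma w_nn: "i < m \<Longrightarrow> 0 \<le> w i"
  using w_in unfolding Lambda_S_def Delta_S_def Delta_def by auto

lemma wS: "i < m \<Longrightarrow> (w i = 0 \<longleftrightarrow> i \<notin> S)"
  using w_in unfolding Lambda_S_def Delta_S_def by auto

lemma wSpos: "i \<in> S \<Longrightarrow> w i > 0"
  using wS w_nn S_sub by force

lemma dLS: "i \<in> S \<Longrightarrow> dL m E i w = 0"
  using w_in unfolding Lambda_S_def by auto

definition h :: "nat \<Rightarrow> nat \<Rightarrow> real" where
  "h i j = - (1 / real (card E)) * (\<Sum>I\<in>E. of_bool (i \<in> I \<and> j \<in> I) / (vsum w I)^2)"

lemma h_sym: "h i j = h j i"
  unfolding h_def by (simp add: conj_commute)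

lemma JF_ent:
  assumes "i < m" "j < m"
  shows "JF m E w $$ (i,j) = of_bool (i = j) * dL m E i w + w i * h i j"
proof -
  define u where "u = unitv j i"
  have u: "u = of_bool (i = j)" unfolding u_def unitv_def by auto
  have "JF m E w $$ (i,j) = pderiv_at (Ffun m E i) j w"
    unfolding JF_def using assms by simp
  also have "\<dots> = - u + (1 / real (card E)) *
     (\<Sum>I\<in>{I\<in>E. i \<in> I}. (u * vsum w I - w i * of_bool (j \<in> I)) / (vsum w I)^2)"
    unfolding u_def by (rule pd_F[OF fE pos])
  also have "(\<Sum>I\<in>{I\<in>E. i \<in> I}. (u * vsum w I - w i * of_bool (j \<in> I)) / (vsum w I)^2)
     = (\<Sum>I\<in>E. u * (of_bool (i \<in> I) / vsum w I) - w i * (of_bool (i \<in> I \<and> j \<in> I) / (vsum w I)^2))"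
    unfolding sum.inter_filter[OF fE]
    by (rule sum.cong) (use vpos in \<open>auto simp: power2_eq_square field_simps\<close>)
  also have "\<dots> = u * (\<Sum>I\<in>E. of_bool (i \<in> I) / vsum w I) - w i * (\<Sum>I\<in>E. of_bool (i \<in> I \<and> j \<in> I) / (vsum w I)^2)"
    by (simp add: sum_subtractf sum_distrib_left)
  finally show ?thesis
    unfolding pd_L[OF fE pos] h_def u using assms by (simp add: algebra_simps)
qed

lemma JF_notS: "i < m \<Longrightarrow> i \<notin> S \<Longrightarrow> j < m \<Longrightarrow> JF m E w $$ (i,j) = of_bool (i = j) * dL m E i w"
  using JF_ent wS by simp

lemma JF_S: "i \<in> S \<Longrightarrow> j < m \<Longrightarrow> JF m E w $$ (i,j) = w i * h i j"
  using JF_ent dLS S_sub by auto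

lemma dL_pos_eq: "i < m \<Longrightarrow> dL m E i w = -1 + (1 / real (card E)) * (\<Sum>I\<in>E. of_bool (i \<in> I) / vsum w I)"
  using pd_L[OF fE pos] by simp

end



lemma swap3: "(\<Sum>a\<in>A. \<Sum>b\<in>B. \<Sum>I\<in>C. F a b I) = (\<Sum>I\<in>C. \<Sum>a\<in>A. \<Sum>b\<in>B. (F a b I :: 'a::comm_monoid_add))"
proof -
  have "(\<Sum>a\<in>A. \<Sum>b\<in>B. \<Sum>I\<in>C. F a b I) = (\<Sum>a\<in>A. \<Sum>I\<in>C. \<Sum>b\<in>B. F a b I)"
    by (rule sum.cong[OF refl]) (rule sum.swap)
  also have "\<dots> = (\<Sum>I\<in>C. \<Sum>a\<in>A. \<Sum>b\<in>B. F a b I)" by (rule sum.swap)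
  finally show ?thesis .
qed

context hyp begin

definition sig :: "nat \<Rightarrow> nat" where "sig a = sorted_list_of_set S ! a"

lemma fS: "finite S" using S_sub finite_subset by blast

lemma bij: "bij_betw sig {..<card S} S"
  unfolding sig_def
  by (rule bij_betw_nth) (use fS in \<open>auto simp: distinct_sorted_list_of_set length_sorted_list_of_set set_sorted_list_of_set\<close>)

lemma sig_S: "a < card S \<Longrightarrow> sig a \<in> S"
  using bij by (auto simp: bij_betw_def)

lemma sig_m: "a < card S \<Longrightarrow> sig a < m"
  using sig_S S_sub by auto

lemma sig_inj: "a < card S \<Longrightarrow> b < card S \<Longrightarrow> sig a = sig b \<longleftrightarrow> a = b"
  using bij by (auto simp: bij_betw_def inj_on_def)

lemma sig_surj: "i \<in> S \<Longrightarrow> \<exists>a<card S. sig a = i"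
  using bij by (metis bij_betw_def imageE lessThan_iff)

lemma sum_reindex:
  assumes "\<And>j. j < m \<Longrightarrow> j \<notin> S \<Longrightarrow> f j = 0"
  shows "(\<Sum>j<m. f j) = (\<Sum>b<card S. f (sig b))"
proof -
  have "(\<Sum>j<m. f j) = (\<Sum>j\<in>S. f j)"
    by (rule sum.mono_neutral_right) (use S_sub assms in auto)
  also have "\<dots> = (\<Sum>b<card S. f (sig b))"
    by (rule sum.reindex_bij_betw[OF bij, symmetric])
  finally show ?thesis .
qed

lemma h_of_real: "(of_real (h i j) :: 'a::real_field) =
   - of_real (1 / real (card E)) * (\<Sum>I\<in>E. of_real (1 / (vsum w I)^2) * of_bool (i \<in> I) * of_bool (j \<in> I))"
  unfolding h_def of_real_mult of_real_minus of_real_sum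
  by (rule arg_cong[where f="\<lambda>x. _ * x"], rule sum.cong) auto

lemma Qform:
  fixes X Y :: "nat \<Rightarrow> 'a::real_field"
  shows "(\<Sum>a<card S. \<Sum>b<card S. of_real (h (sig a) (sig b)) * X b * Y a) =
    - of_real (1 / real (card E)) * (\<Sum>I\<in>E. of_real (1 / (vsum w I)^2) *
       ((\<Sum>a<card S. of_bool (sig a \<in> I) * Y a) * (\<Sum>b<card S. of_bool (sig b \<in> I) * X b)))"
proof -
  have "(\<Sum>a<card S. \<Sum>b<card S. of_real (h (sig a) (sig b)) * X b * Y a) =
     - of_real (1 / real (card E)) * (\<Sum>a<card S. \<Sum>b<card S. \<Sum>I\<in>E.
        of_real (1 / (vsum w I)^2) * (of_bool (sig a \<in> I) * Y a) * (of_bool (sig b \<in> I) * X b))"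
    unfolding h_of_real by (simp add: sum_distrib_left sum_distrib_right mult_ac)
  also have "\<dots> = - of_real (1 / real (card E)) * (\<Sum>I\<in>E. \<Sum>a<card S. \<Sum>b<card S.
        of_real (1 / (vsum w I)^2) * (of_bool (sig a \<in> I) * Y a) * (of_bool (sig b \<in> I) * X b))"
    by (subst swap3) (rule refl)
  also have "\<dots> = - of_real (1 / real (card E)) * (\<Sum>I\<in>E. of_real (1 / (vsum w I)^2) *
       ((\<Sum>a<card S. of_bool (sig a \<in> I) * Y a) * (\<Sum>b<card S. of_bool (sig b \<in> I) * X b)))"
    apply (simp only: sum_distrib_left sum_distrib_right mult.assoc)
    apply (rule sum.cong[OF refl])
    apply (subst sum.swap)
    apply (simp add: mult_ac)
    done
  finally show ?thesis .
qed

end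



context hyp begin

definition Bm :: "real mat" where "Bm = mat (card S) (card S) (\<lambda>(a,b). w (sig a) * h (sig a) (sig b))"
definition Pm :: "real mat" where "Pm = mat (card S) (card S) (\<lambda>(a,b). if a = b then 1 / w (sig a) else 0)"

lemma Bm_carrier: "Bm \<in> carrier_mat (card S) (card S)" unfolding Bm_def by simp
lemma Pm_carrier: "Pm \<in> carrier_mat (card S) (card S)" unfolding Pm_def by simp

lemma wsig_pos: "a < card S \<Longrightarrow> w (sig a) > 0" using wSpos sig_S by blast

lemma Bm_mult: "x \<in> carrier_vec (card S) \<Longrightarrow> a < card S \<Longrightarrow>
   (Bm *\<^sub>v x) $ a = w (sig a) * (\<Sum>b<card S. h (sig a) (sig b) * x $ b)"
  by (simp add: Bm_def scalar_prod_def sum_distrib_left atLeast0LessThan mult.assoc)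

lemma Bc_mult: "x \<in> carrier_vec (card S) \<Longrightarrow> a < card S \<Longrightarrow>
   (map_mat complex_of_real Bm *\<^sub>v x) $ a = of_real (w (sig a)) * (\<Sum>b<card S. of_real (h (sig a) (sig b)) * x $ b)"
  by (simp add: Bm_def scalar_prod_def sum_distrib_left atLeast0LessThan mult.assoc)

lemma Pm_mult: "y \<in> carrier_vec (card S) \<Longrightarrow> a < card S \<Longrightarrow> (Pm *\<^sub>v y) $ a = y $ a / w (sig a)"
proof -
  assume y: "y \<in> carrier_vec (card S)" and a: "a < card S"
  have "(Pm *\<^sub>v y) $ a = (\<Sum>i<card S. (if a = i then 1 / w (sig a) else 0) * y $ i)"
    using y a by (simp add: Pm_def scalar_prod_def atLeast0LessThan)
  also have "\<dots> = (\<Sum>i<card S. if a = i then y $ i / w (sig a) else 0)"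
    by (rule sum.cong) auto
  also have "\<dots> = y $ a / w (sig a)" using a by simp
  finally show ?thesis .
qed

lemma ip_eq: "z \<in> carrier_vec (card S) \<Longrightarrow> y \<in> carrier_vec (card S) \<Longrightarrow>
   ip_mat Pm z y = (\<Sum>a<card S. z $ a * (y $ a / w (sig a)))"
  unfolding ip_mat_def scalar_prod_def
  by (rule sum.cong) (use Pm_carrier in \<open>auto simp: Pm_mult atLeast0LessThan simp del: index_mult_mat_vec\<close>)

lemma Q_sym: "(\<Sum>a<card S. \<Sum>b<card S. h (sig a) (sig b) * X b * Y a) =
    (\<Sum>a<card S. \<Sum>b<card S. h (sig a) (sig b) * Y b * (X a :: real))"
  by (subst sum.swap) (simp add: h_sym mult_ac)

lemma ipB_left: "x \<in> carrier_vec (card S) \<Longrightarrow> y \<in> carrier_vec (card S) \<Longrightarrow>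
   ip_mat Pm (Bm *\<^sub>v x) y = (\<Sum>a<card S. \<Sum>b<card S. h (sig a) (sig b) * x $ b * y $ a)"
  using Bm_carrier
  apply (simp add: ip_eq Bm_mult del: index_mult_mat_vec)
  apply (rule sum.cong[OF refl])
  apply (simp add: sum_distrib_right sum_divide_distrib)
  using wsig_pos by (metis less_irrefl)


lemma ipB_right: "x \<in> carrier_vec (card S) \<Longrightarrow> y \<in> carrier_vec (card S) \<Longrightarrow>
   ip_mat Pm x (Bm *\<^sub>v y) = (\<Sum>a<card S. \<Sum>b<card S. h (sig a) (sig b) * y $ b * x $ a)"
  using Bm_carrier
  apply (simp add: ip_eq Bm_mult del: index_mult_mat_vec)
  apply (rule sum.cong[OF refl])
  apply (simp add: sum_distrib_right sum_distrib_left sum_divide_distrib)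
  apply (intro conjI impI)
  using wsig_pos apply (metis less_irrefl)
  apply (simp add: mult_ac)
  done

lemma selfadj: "self_adjoint_wrt (card S) Pm Bm"
  unfolding self_adjoint_wrt_def
  by (auto simp: ipB_left ipB_right intro: Q_sym)

lemma Qreal: "(\<Sum>a<card S. \<Sum>b<card S. h (sig a) (sig b) * X b * Y a) =
    - (1 / real (card E)) * (\<Sum>I\<in>E. (1 / (vsum w I)^2) *
       ((\<Sum>a<card S. of_bool (sig a \<in> I) * Y a) * (\<Sum>b<card S. of_bool (sig b \<in> I) * (X b :: real))))"
  using Qform[where 'a=real, of X Y] by simp

lemma negsemi: "neg_semidef_wrt (card S) Pm Bm"
  unfolding neg_semidef_wrt_def
proof (intro ballI)
  fix x :: "real Matrix.vec" assume x: "x \<in> carrier_vec (card S)"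
  have "(\<Sum>I\<in>E. (1 / (vsum w I)^2) *
       ((\<Sum>a<card S. of_bool (sig a \<in> I) * x $ a) * (\<Sum>b<card S. of_bool (sig b \<in> I) * x $ b))) \<ge> 0"
    by (intro sum_nonneg, rule mult_nonneg_nonneg) auto
  then show "ip_mat Pm (Bm *\<^sub>v x) x \<le> 0"
    unfolding ipB_left[OF x x] Qreal by (simp add: mult_nonneg_nonneg)
qed

lemma vec_nonzero: "x \<in> carrier_vec n \<Longrightarrow> x \<noteq> 0\<^sub>v n \<Longrightarrow> \<exists>a<n. x $ a \<noteq> 0"
  by (metis carrier_vecD eq_vecI index_zero_vec(1) index_zero_vec(2))

lemma innerP: "is_inner_product_mat (card S) Pm"
  unfolding is_inner_product_mat_def
proof (intro conjI ballI impI)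
  show "Pm \<in> carrier_mat (card S) (card S)" by (rule Pm_carrier)
  show "Pm\<^sup>T = Pm" unfolding Pm_def by (rule eq_matI) auto
  fix x :: "real Matrix.vec" assume x: "x \<in> carrier_vec (card S)" and nz: "x \<noteq> 0\<^sub>v (card S)"
  obtain a where a: "a < card S" "x $ a \<noteq> 0" using vec_nonzero[OF x nz] by blast
  have "0 < (\<Sum>a<card S. x $ a * (x $ a / w (sig a)))"
  proof (rule sum_pos2[of _ a])
    show "0 < x $ a * (x $ a / w (sig a))" using a wsig_pos[OF a(1)]
      by (metis divide_pos_pos not_real_square_gt_zero times_divide_eq_right)
    show "0 \<le> x $ i * (x $ i / w (sig i))" if "i \<in> {..<card S}" for i
      using wsig_pos[of i] that by (simp add: divide_nonneg_pos)
  qed (use a in auto)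
  then show "0 < ip_mat Pm x x" using ip_eq[OF x x] by simp
qed

end



lemma cnj_of_bool: "cnj (of_bool P) = of_bool P" by (cases P) auto

context hyp begin

lemma Bc_eig:
  assumes ev: "eigenvalue (map_mat complex_of_real Bm) z"
  shows "Im z = 0 \<and> Re z \<le> 0"
proof -
  let ?k = "card S"
  let ?Bc = "map_mat complex_of_real Bm"
  obtain x where x: "x \<in> carrier_vec ?k" and nz: "x \<noteq> 0\<^sub>v ?k" and Bx: "?Bc *\<^sub>v x = z \<cdot>\<^sub>v x"
    using ev Bm_carrier unfolding eigenvalue_def eigenvector_def by auto
  have Bxa: "(?Bc *\<^sub>v x) $ a = z * x $ a" if "a < ?k" for a
    using Bx that x by simp
  define LHS where "LHS = (\<Sum>a<?k. cnj (x $ a) * (?Bc *\<^sub>v x) $ a / of_real (w (sig a)))"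
  define R where "R = (\<Sum>a<?k. (cmod (x $ a))^2 / w (sig a))"
  define zI where "zI I = (\<Sum>b<?k. of_bool (sig b \<in> I) * x $ b)" for I
  define T where "T = (1 / real (card E)) * (\<Sum>I\<in>E. (1 / (vsum w I)^2) * (cmod (zI I))^2)"
  have pw1: "cnj y * (z * y) / of_real r = z * (of_real ((cmod y)^2) / of_real r)" for y :: complex and r
    using complex_norm_square[of y] by (simp add: mult_ac)
  have "LHS = (\<Sum>a<?k. z * (of_real ((cmod (x $ a))^2) / of_real (w (sig a))))"
    unfolding LHS_def by (rule sum.cong[OF refl]) (simp add: Bxa pw1 del: index_mult_mat_vec)
  also have "\<dots> = z * of_real R"
    unfolding R_def by (simp add: sum_distrib_left of_real_sum)
  finally have L1: "LHS = z * of_real R" .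
  have "LHS = (\<Sum>a<?k. \<Sum>b<?k. of_real (h (sig a) (sig b)) * x $ b * cnj (x $ a))"
    unfolding LHS_def
  proof (rule sum.cong[OF refl])
    fix a assume a: "a \<in> {..<?k}"
    then have wa: "w (sig a) \<noteq> 0" using wsig_pos by force
    show "cnj (x $ a) * (?Bc *\<^sub>v x) $ a / of_real (w (sig a)) =
      (\<Sum>b<?k. of_real (h (sig a) (sig b)) * x $ b * cnj (x $ a))"
      using a x wa by (simp add: Bc_mult sum_distrib_left sum_distrib_right sum_divide_distrib mult_ac del: index_mult_mat_vec)
  qed
  also have "\<dots> = - of_real (1 / real (card E)) * (\<Sum>I\<in>E. of_real (1 / (vsum w I)^2) *
       ((\<Sum>a<?k. of_bool (sig a \<in> I) * cnj (x $ a)) * (\<Sum>b<?k. of_bool (sig b \<in> I) * x $ b)))"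
    by (rule Qform)
  also have "\<dots> = - of_real (1 / real (card E)) * (\<Sum>I\<in>E. of_real (1 / (vsum w I)^2) * (cnj (zI I) * zI I))"
    unfolding zI_def by (simp add: cnj_sum cnj_of_bool)
  also have "\<dots> = - of_real T"
    unfolding T_def using complex_norm_square
    by (simp add: of_real_sum mult.commute)
  finally have L2: "LHS = - of_real T" .
  obtain a where a: "a < ?k" "x $ a \<noteq> 0" using vec_nonzero[OF x nz] by blast
  have Rpos: "R > 0" unfolding R_def
  proof (rule sum_pos2[of _ a])
    show "0 < (cmod (x $ a))\<^sup>2 / w (sig a)" using a wsig_pos[OF a(1)] by simp
    show "0 \<le> (cmod (x $ i))\<^sup>2 / w (sig i)" if "i \<in> {..<card S}" for i
      using wsig_pos[of i] that by simp
  qed (use a in auto)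
  have Tnn: "T \<ge> 0" unfolding T_def by (intro mult_nonneg_nonneg sum_nonneg) auto
  have "z * of_real R = - of_real T" using L1 L2 by simp
  then have "z = of_real (- T / R)" using Rpos by (simp add: field_simps)
  then show ?thesis using Rpos Tnn by (simp add: divide_nonneg_pos)
qed

end



context hyp begin

abbreviation "Ac \<equiv> map_mat complex_of_real (JF m E w)"
abbreviation "Bc \<equiv> map_mat complex_of_real Bm"

lemma Ac_carrier: "Ac \<in> carrier_mat m m" unfolding JF_def by simp

lemma Ac_ent: "i < m \<Longrightarrow> j < m \<Longrightarrow> Ac $$ (i,j) = of_real (JF m E w $$ (i,j))"
  unfolding JF_def by simp

lemma Arow: "v \<in> carrier_vec m \<Longrightarrow> i < m \<Longrightarrow> (Ac *\<^sub>v v) $ i = (\<Sum>j<m. of_real (JF m E w $$ (i,j)) * v $ j)"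
  using Ac_carrier by (auto simp: scalar_prod_def atLeast0LessThan Ac_ent intro!: sum.cong)

lemma Arow_notS: "v \<in> carrier_vec m \<Longrightarrow> i < m \<Longrightarrow> i \<notin> S \<Longrightarrow> (Ac *\<^sub>v v) $ i = of_real (dL m E i w) * v $ i"
proof -
  assume v: "v \<in> carrier_vec m" and i: "i < m" "i \<notin> S"
  have "(Ac *\<^sub>v v) $ i = (\<Sum>j<m. if j = i then of_real (dL m E i w) * v $ j else 0)"
    unfolding Arow[OF v i(1)] by (rule sum.cong[OF refl]) (use i in \<open>auto simp: JF_notS\<close>)
  also have "\<dots> = of_real (dL m E i w) * v $ i" using i by simp
  finally show ?thesis .
qed

lemma Arow_S: "v \<in> carrier_vec m \<Longrightarrow> a < card S \<Longrightarrow> (\<forall>j<m. j \<notin> S \<longrightarrow> v $ j = 0) \<Longrightarrow>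
   (Ac *\<^sub>v v) $ (sig a) = of_real (w (sig a)) * (\<Sum>b<card S. of_real (h (sig a) (sig b)) * v $ (sig b))"
proof -
  assume v: "v \<in> carrier_vec m" and a: "a < card S" and z: "\<forall>j<m. j \<notin> S \<longrightarrow> v $ j = 0"
  have "(Ac *\<^sub>v v) $ (sig a) = (\<Sum>j<m. of_real (w (sig a) * h (sig a) j) * v $ j)"
    unfolding Arow[OF v sig_m[OF a]] by (rule sum.cong[OF refl]) (use a sig_S in \<open>auto simp: JF_S\<close>)
  also have "\<dots> = (\<Sum>b<card S. of_real (w (sig a) * h (sig a) (sig b)) * v $ (sig b))"
    by (rule sum_reindex) (use z in auto)
  also have "\<dots> = of_real (w (sig a)) * (\<Sum>b<card S. of_real (h (sig a) (sig b)) * v $ (sig b))"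
    by (simp add: sum_distrib_left mult_ac)
  finally show ?thesis .
qed

lemma eig_transpose: "eigenvalue (Ac\<^sup>T) z \<Longrightarrow> eigenvalue Ac z"
proof -
  assume "eigenvalue (Ac\<^sup>T) z"
  have t: "Ac\<^sup>T \<in> carrier_mat m m" using Ac_carrier by simp
  show ?thesis using \<open>eigenvalue (Ac\<^sup>T) z\<close>
    unfolding eigenvalue_root_char_poly[OF Ac_carrier] eigenvalue_root_char_poly[OF t]
      char_poly_transpose_mat[OF Ac_carrier] .
qed

lemma spec_iff: "eigenvalue Ac z \<longleftrightarrow> (\<exists>i<m. i \<notin> S \<and> z = of_real (dL m E i w)) \<or> eigenvalue Bc z"
proof
  assume "eigenvalue Ac z"
  then obtain v where v: "v \<in> carrier_vec m" and nz: "v \<noteq> 0\<^sub>v m" and Av: "Ac *\<^sub>v v = z \<cdot>\<^sub>v v"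
    using Ac_carrier unfolding eigenvalue_def eigenvector_def by auto
  have Avi: "(Ac *\<^sub>v v) $ i = z * v $ i" if "i < m" for i using Av that v by simp
  show "(\<exists>i<m. i \<notin> S \<and> z = of_real (dL m E i w)) \<or> eigenvalue Bc z"
  proof (cases "\<exists>i<m. i \<notin> S \<and> v $ i \<noteq> 0")
    case True
    then obtain i where i: "i < m" "i \<notin> S" "v $ i \<noteq> 0" by blast
    have "of_real (dL m E i w) * v $ i = z * v $ i" using Arow_notS[OF v i(1,2)] Avi[OF i(1)] by auto
    then have "z = of_real (dL m E i w)" using i(3) by simp
    then show ?thesis using i by blast
  next
    case False
    then have zero: "\<forall>j<m. j \<notin> S \<longrightarrow> v $ j = 0" by blast
    define x where "x = vec (card S) (\<lambda>a. v $ sig a)"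
    have x: "x \<in> carrier_vec (card S)" unfolding x_def by simp
    obtain i where i: "i < m" "v $ i \<noteq> 0" using vec_nonzero[OF v nz] by blast
    then have "i \<in> S" using zero by blast
    then obtain a where a: "a < card S" "sig a = i" using sig_surj by blast
    have xnz: "x \<noteq> 0\<^sub>v (card S)"
    proof
      assume "x = 0\<^sub>v (card S)"
      then have "x $ a = 0" using a by simp
      then show False using a i unfolding x_def by simp
    qed
    have "Bc *\<^sub>v x = z \<cdot>\<^sub>v x"
    proof (rule eq_vecI)
      show "dim_vec (Bc *\<^sub>v x) = dim_vec (z \<cdot>\<^sub>v x)" using x Bm_carrier by simp
      fix b assume "b < dim_vec (z \<cdot>\<^sub>v x)"
      then have b: "b < card S" using x by simp
      have "(Bc *\<^sub>v x) $ b = of_real (w (sig b)) * (\<Sum>c<card S. of_real (h (sig b) (sig c)) * x $ c)"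
        by (rule Bc_mult[OF x b])
      also have "\<dots> = (Ac *\<^sub>v v) $ (sig b)"
        unfolding Arow_S[OF v b zero] x_def by simp
      also have "\<dots> = z * v $ sig b" using Avi sig_m[OF b] by simp
      finally show "(Bc *\<^sub>v x) $ b = (z \<cdot>\<^sub>v x) $ b" using b unfolding x_def by simp
    qed
    then have "eigenvalue Bc z" unfolding eigenvalue_def eigenvector_def
      using x xnz Bm_carrier by auto
    then show ?thesis by blast
  qed
next
  assume "(\<exists>i<m. i \<notin> S \<and> z = of_real (dL m E i w)) \<or> eigenvalue Bc z"
  then show "eigenvalue Ac z"
  proof
    assume "\<exists>i<m. i \<notin> S \<and> z = of_real (dL m E i w)"
    then obtain i where i: "i < m" "i \<notin> S" "z = of_real (dL m E i w)" by blast
    have "Ac\<^sup>T *\<^sub>v unit_vec m i = z \<cdot>\<^sub>v unit_vec m i"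
    proof (rule eq_vecI)
      show "dim_vec (Ac\<^sup>T *\<^sub>v unit_vec m i) = dim_vec (z \<cdot>\<^sub>v unit_vec m i)" using Ac_carrier by simp
      fix j assume "j < dim_vec (z \<cdot>\<^sub>v unit_vec m i)"
      then have j: "j < m" by simp
      have "(Ac\<^sup>T *\<^sub>v unit_vec m i) $ j = (\<Sum>l<m. Ac $$ (l, j) * (if l = i then 1 else 0))"
        using j Ac_carrier using i by (auto simp: scalar_prod_def atLeast0LessThan unit_vec_def intro!: sum.cong)
      also have "\<dots> = Ac $$ (i, j)" using i by (simp add: if_distrib cong: if_cong)
      also have "\<dots> = of_real (of_bool (i = j) * dL m E i w)" using Ac_ent i j JF_notS by simp
      finally show "(Ac\<^sup>T *\<^sub>v unit_vec m i) $ j = (z \<cdot>\<^sub>v unit_vec m i) $ j" using i j by auto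
    qed
    then have "eigenvalue (Ac\<^sup>T) z" unfolding eigenvalue_def eigenvector_def
      using i Ac_carrier by (intro exI[of _ "unit_vec m i"]) auto
    then show ?thesis by (rule eig_transpose)
  next
    assume "eigenvalue Bc z"
    then obtain x where x: "x \<in> carrier_vec (card S)" and nz: "x \<noteq> 0\<^sub>v (card S)" and Bx: "Bc *\<^sub>v x = z \<cdot>\<^sub>v x"
      using Bm_carrier unfolding eigenvalue_def eigenvector_def by auto
    define tau where "tau = inv_into {..<card S} sig"
    have tau1: "tau j < card S" "sig (tau j) = j" if "j \<in> S" for j
    proof -
      have "j \<in> sig ` {..<card S}" using that bij by (simp add: bij_betw_def)
      then show "tau j < card S" "sig (tau j) = j" unfolding tau_def
        using inv_into_into[of j sig "{..<card S}"] f_inv_into_f[of j sig "{..<card S}"] by auto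
    qed
    have tau2: "tau (sig a) = a" if "a < card S" for a
      using that bij unfolding tau_def by (auto simp: bij_betw_def inv_into_f_f)
    define v where "v = vec m (\<lambda>j. if j \<in> S then x $ tau j else 0)"
    have v: "v \<in> carrier_vec m" unfolding v_def by simp
    have zero: "\<forall>j<m. j \<notin> S \<longrightarrow> v $ j = 0" unfolding v_def by simp
    have vsig: "v $ sig a = x $ a" if "a < card S" for a
      using that sig_S sig_m tau2 unfolding v_def by simp
    obtain a where a: "a < card S" "x $ a \<noteq> 0" using vec_nonzero[OF x nz] by blast
    have vnz: "v \<noteq> 0\<^sub>v m"
    proof
      assume "v = 0\<^sub>v m"
      then have "v $ sig a = 0" using sig_m[OF a(1)] by simp
      then show False using vsig a by simp
    qed
    have "Ac *\<^sub>v v = z \<cdot>\<^sub>v v"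
    proof (rule eq_vecI)
      show "dim_vec (Ac *\<^sub>v v) = dim_vec (z \<cdot>\<^sub>v v)" using v Ac_carrier by simp
      fix i assume "i < dim_vec (z \<cdot>\<^sub>v v)"
      then have i: "i < m" using v by simp
      show "(Ac *\<^sub>v v) $ i = (z \<cdot>\<^sub>v v) $ i"
      proof (cases "i \<in> S")
        case False
        then show ?thesis using Arow_notS[OF v i False] zero i v by simp
      next
        case True
        then obtain b where b: "b < card S" "sig b = i" using sig_surj by blast
        have "(Ac *\<^sub>v v) $ i = of_real (w (sig b)) * (\<Sum>c<card S. of_real (h (sig b) (sig c)) * v $ (sig c))"
          using Arow_S[OF v b(1) zero] b by simp
        also have "\<dots> = (Bc *\<^sub>v x) $ b" using Bc_mult[OF x b(1)] vsig by simp
        also have "\<dots> = z * x $ b" using Bx b x by simp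
        finally show ?thesis using vsig[OF b(1)] b i v by simp
      qed
    qed
    then show "eigenvalue Ac z" unfolding eigenvalue_def eigenvector_def
      using v vnz Ac_carrier by auto
  qed
qed

end



theorem mainTheorem7:
  fixes m :: nat and E :: "nat set set" and c :: real and S :: "nat set" and w :: "nat \<Rightarrow> real"
  assumes E_ne: "E \<noteq> {}"
    and E_edges: "\<forall>I\<in>E. I \<noteq> {} \<and> I \<subseteq> {..<m}"
    and E_cover: "\<forall>i<m. \<exists>I\<in>E. i \<in> I"
    and c_pos: "0 < c" and c_lt: "c < 1 / real (card E)"
    and S_sub: "S \<subseteq> {..<m}"
    and w_in: "w \<in> Lambda_S m E c S"
  shows "(\<forall>z\<in>cspectrum (JF m E w).
            (\<exists>i<m. i \<notin> S \<and> z = complex_of_real (dL m E i w))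
            \<or> (Im z = 0 \<and> Re z \<le> 0))
       \<and> (\<exists>B P. B \<in> carrier_mat (card S) (card S)
            \<and> is_inner_product_mat (card S) P
            \<and> self_adjoint_wrt (card S) P B
            \<and> neg_semidef_wrt (card S) P B
            \<and> cspectrum (JF m E w) =
                 {complex_of_real (dL m E i w) | i. i < m \<and> i \<notin> S} \<union> cspectrum B)
       \<and> ((\<exists>r::real. 0 < r \<and> complex_of_real r \<in> cspectrum (JF m E w))
            \<longleftrightarrow> (\<exists>i<m. w i = 0 \<and> dL m E i w > 0))"
proof -
  interpret hyp m E c S w using assms by unfold_locales
  have mem: "z \<in> cspectrum (JF m E w) \<longleftrightarrow> (\<exists>i<m. i \<notin> S \<and> z = of_real (dL m E i w)) \<or> z \<in> cspectrum Bm" for z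
    unfolding cspectrum_def spectrum_def using spec_iff by simp
  have Bsp: "z \<in> cspectrum Bm \<Longrightarrow> Im z = 0 \<and> Re z \<le> 0" for z
    unfolding cspectrum_def spectrum_def using Bc_eig by simp
  have P1: "\<forall>z\<in>cspectrum (JF m E w).
            (\<exists>i<m. i \<notin> S \<and> z = complex_of_real (dL m E i w)) \<or> (Im z = 0 \<and> Re z \<le> 0)"
    using mem Bsp by blast
  have P2: "\<exists>B P. B \<in> carrier_mat (card S) (card S)
            \<and> is_inner_product_mat (card S) P
            \<and> self_adjoint_wrt (card S) P B
            \<and> neg_semidef_wrt (card S) P B
            \<and> cspectrum (JF m E w) =
                 {complex_of_real (dL m E i w) | i. i < m \<and> i \<notin> S} \<union> cspectrum B"
  proof (intro exI conjI)
    show "cspectrum (JF m E w) = {complex_of_real (dL m E i w) | i. i < m \<and> i \<notin> S} \<union> cspectrum Bm"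
      using mem by blast
  qed (rule Bm_carrier innerP selfadj negsemi)+
  have P3: "(\<exists>r::real. 0 < r \<and> complex_of_real r \<in> cspectrum (JF m E w))
            \<longleftrightarrow> (\<exists>i<m. w i = 0 \<and> dL m E i w > 0)"
  proof
    assume "\<exists>r::real. 0 < r \<and> complex_of_real r \<in> cspectrum (JF m E w)"
    then obtain r where r: "0 < r" "complex_of_real r \<in> cspectrum (JF m E w)" by blast
    then consider (a) "\<exists>i<m. i \<notin> S \<and> complex_of_real r = of_real (dL m E i w)"
      | (b) "complex_of_real r \<in> cspectrum Bm" using mem by blast
    then show "\<exists>i<m. w i = 0 \<and> dL m E i w > 0"
    proof cases
      case a
      then obtain i where "i < m" "i \<notin> S" "r = dL m E i w" by auto
      then show ?thesis using r wS by auto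
    next
      case b
      then show ?thesis using Bsp r by fastforce
    qed
  next
    assume "\<exists>i<m. w i = 0 \<and> dL m E i w > 0"
    then obtain i where i: "i < m" "w i = 0" "dL m E i w > 0" by blast
    then have "i \<notin> S" using wS by blast
    then have "complex_of_real (dL m E i w) \<in> cspectrum (JF m E w)" using mem i by blast
    then show "\<exists>r::real. 0 < r \<and> complex_of_real r \<in> cspectrum (JF m E w)" using i by blast
  qed
  show ?thesis using P1 P2 P3 by blast
qed



end
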